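(* Let $\sigma>0$, $\gamma''=\gamma(1+\sigma)$, an integer $\tau\ge1$ and $D\ge0$ be given. For every $(s,a)$ define $W_{\tau;\tau}(s,a)=0$, $Y_{\tau;\tau}(s,a)=D$, and for $t\ge\tau$: if $t\notin T^A$ then $W_{t+1;\tau}=W_{t;\tau}$ and $Y_{t+1;\tau}=Y_{t;\tau}$; if $t\in T^A$ then $W_{t+1;\tau}(s,a)=(1-\alpha_t)W_{t;\tau}(s,a)+\alpha_tw_t(s,a)$ and $Y_{t+1;\tau}(s,a)=(1-\alpha_t)Y_{t;\tau}(s,a)+\alpha_t\gamma''D$. Then on every realization for which $\|r_t\|\le D$ and $\|u^{BA}_t\|\le\sigma D$ for all $t\ge\tau$, we have for all $t\ge\tau$ and all $(s,a)$: $$-Y_{t;\tau}(s,a)+W_{t;\tau}(s,a)\le r_t(s,a)\le Y_{t;\tau}(s,a)+W_{t;\tau}(s,a).$$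
   Context: Finite MDP with discount $\gamma\in(0,1)$, rewards $R_t(s,a,s')$ with mean $R_{sa}^{s'}$; $\|Q\|=\max_{s,a}|Q(s,a)|$; $\mathcal T Q(s,a)=\mathbb E_{s'\sim P(\cdot|s,a)}[R_{sa}^{s'}+\gamma\max_{a'}Q(s',a')]$ with unique fixed point $Q^*$. Synchronous double Q-learning with learning rates $\alpha_t\in(0,1]$: at each iteration $t$ an independent fair coin selects UPDATE(A) or UPDATE(B); for every $(s,a)$ a next state $s'\sim P(\cdot|s,a)$ and a reward $R_t(s,a,s')$ are sampled. Under UPDATE(A): $a^*=\arg\max_{a'}Q^A_t(s',a')$, $Q^A_{t+1}(s,a)=Q^A_t(s,a)+\alpha_t(R_t(s,a,s')+\gamma Q^B_t(s',a^* )-Q^A_t(s,a))$, $Q^B_{t+1}=Q^B_t$. Under UPDATE(B): $b^*=\arg\max_{b'}Q^B_t(s',b')$, $Q^B_{t+1}(s,a)=Q^B_t(s,a)+\alpha_t(R_t(s,a,s')+\gamma Q^A_t(s',b^* )-Q^B_t(s,a))$, $Q^A_{t+1}=Q^A_t$. $T^A$ is the (random) set of iterations at which UPDATE(A) is chosen. $r_t:=Q^A_t-Q^*$, $u^{BA}_t:=Q^B_t-Q^A_t$, and for $t\in T^A$, $w_t(s,a):=R_t(s,a,s')+\gamma Q^A_t(s',a^* )-(\mathcal TQ^A_t)(s,a)$. *)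

theory Defs
  imports "HOL-Probability.Probability"
begin

type_synonym ('s,'a) qfun = "'s \<Rightarrow> 'a \<Rightarrow> real"

definition qnorm :: "('s::finite, 'a::finite) qfun \<Rightarrow> real" where
  "qnorm Q = Max {\<bar>Q s a\<bar> | s a. True}"

definition vmax :: "('s, 'a::finite) qfun \<Rightarrow> 's \<Rightarrow> real" where
  "vmax Q s = Max (range (Q s))"

definition bellman :: "real \<Rightarrow> ('s \<Rightarrow> 'a \<Rightarrow> 's pmf) \<Rightarrow> ('s \<Rightarrow> 'a \<Rightarrow> 's \<Rightarrow> real)
    \<Rightarrow> ('s, 'a::finite) qfun \<Rightarrow> ('s, 'a) qfun" where
  "bellman \<gamma> P Rbar Q s a =
     measure_pmf.expectation (P s a) (\<lambda>s'. Rbar s a s' + \<gamma> * vmax Q s')"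

text \<open>Synchronous double Q-learning along one realization.
  coin t = True means UPDATE(A) at iteration t (t \<in> T^A);
  ns t s a is the sampled next state s' for (s,a) at iteration t;
  R t s a s' is the sampled reward R_t(s,a,s');
  astar t s' / bstar t s' are the chosen maximisers of Q^A_t(s',.) / Q^B_t(s',.).\<close>
primrec dq :: "real \<Rightarrow> (nat \<Rightarrow> real) \<Rightarrow> (nat \<Rightarrow> bool) \<Rightarrow> (nat \<Rightarrow> 's \<Rightarrow> 'a \<Rightarrow> 's)
    \<Rightarrow> (nat \<Rightarrow> 's \<Rightarrow> 'a \<Rightarrow> 's \<Rightarrow> real) \<Rightarrow> (nat \<Rightarrow> 's \<Rightarrow> 'a) \<Rightarrow> (nat \<Rightarrow> 's \<Rightarrow> 'a)
    \<Rightarrow> ('s, 'a) qfun \<Rightarrow> ('s, 'a) qfun \<Rightarrow> nat \<Rightarrow> ('s, 'a) qfun \<times> ('s, 'a) qfun" where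
  "dq \<gamma> \<alpha> coin ns R astar bstar QA0 QB0 0 = (QA0, QB0)"
| "dq \<gamma> \<alpha> coin ns R astar bstar QA0 QB0 (Suc t) =
     (let QA = fst (dq \<gamma> \<alpha> coin ns R astar bstar QA0 QB0 t);
          QB = snd (dq \<gamma> \<alpha> coin ns R astar bstar QA0 QB0 t)
      in if coin t then
           ((\<lambda>s a. QA s a + \<alpha> t * (R t s a (ns t s a)
                 + \<gamma> * QB (ns t s a) (astar t (ns t s a)) - QA s a)), QB)
         else
           (QA, (\<lambda>s a. QB s a + \<alpha> t * (R t s a (ns t s a)
                 + \<gamma> * QA (ns t s a) (bstar t (ns t s a)) - QB s a))))"

text \<open>W_{tau+k;tau}: Wseq ... k.  wfn t is w_t (only used at t \<in> T^A).\<close>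
primrec Wseq :: "(nat \<Rightarrow> real) \<Rightarrow> (nat \<Rightarrow> bool) \<Rightarrow> (nat \<Rightarrow> ('s,'a) qfun) \<Rightarrow> nat \<Rightarrow> nat \<Rightarrow> ('s,'a) qfun" where
  "Wseq \<alpha> coin wfn \<tau> 0 = (\<lambda>s a. 0)"
| "Wseq \<alpha> coin wfn \<tau> (Suc k) =
     (if coin (\<tau> + k)
      then (\<lambda>s a. (1 - \<alpha> (\<tau> + k)) * Wseq \<alpha> coin wfn \<tau> k s a + \<alpha> (\<tau> + k) * wfn (\<tau> + k) s a)
      else Wseq \<alpha> coin wfn \<tau> k)"

text \<open>Y_{tau+k;tau}: Yseq ... k, with gamma'' = g2.\<close>
primrec Yseq :: "(nat \<Rightarrow> real) \<Rightarrow> (nat \<Rightarrow> bool) \<Rightarrow> real \<Rightarrow> real \<Rightarrow> nat \<Rightarrow> nat \<Rightarrow> ('s,'a) qfun" where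
  "Yseq \<alpha> coin g2 D \<tau> 0 = (\<lambda>s a. D)"
| "Yseq \<alpha> coin g2 D \<tau> (Suc k) =
     (if coin (\<tau> + k)
      then (\<lambda>s a. (1 - \<alpha> (\<tau> + k)) * Yseq \<alpha> coin g2 D \<tau> k s a + \<alpha> (\<tau> + k) * g2 * D)
      else Yseq \<alpha> coin g2 D \<tau> k)"

end

theory Submission
  imports Defs
begin

lemma qnorm_ge: fixes Q :: "('s::finite,'a::finite) qfun" shows "\<bar>Q s a\<bar> \<le> qnorm Q"
proof -
  have e: "{\<bar>Q s a\<bar> | s a. True} = (\<lambda>(s,a). \<bar>Q s a\<bar>) ` UNIV" by auto
  show ?thesis unfolding qnorm_def e by (rule Max_ge) auto
qed
lemma vmax_le: fixes Q G :: "('s,'a::finite) qfun"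
  assumes "\<And>a. Q s a \<le> G s a + c" shows "vmax Q s \<le> vmax G s + c"
  unfolding vmax_def
proof (rule Max.boundedI)
  fix x assume "x \<in> range (Q s)" then obtain a where "x = Q s a" by auto
  moreover have "G s a \<le> Max (range (G s))" by (rule Max_ge) auto
  ultimately show "x \<le> Max (range (G s)) + c" using assms[of a] by linarith
qed auto
lemma bellman_diff: fixes Q G :: "('s::finite,'a::finite) qfun"
  assumes "0 \<le> \<gamma>" "\<And>s a. \<bar>Q s a - G s a\<bar> \<le> c"
  shows "\<bar>bellman \<gamma> P Rbar Q s a - bellman \<gamma> P Rbar G s a\<bar> \<le> \<gamma> * c"
proof -
  have int: "integrable (measure_pmf (P s a)) f" for f :: "'s \<Rightarrow> real"
    by (rule integrable_measure_pmf_finite) auto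
  have d: "bellman \<gamma> P Rbar Q s a - bellman \<gamma> P Rbar G s a
     = measure_pmf.expectation (P s a) (\<lambda>s'. \<gamma> * (vmax Q s' - vmax G s'))"
    unfolding bellman_def by (subst Bochner_Integration.integral_diff[symmetric]) (auto intro: int simp: algebra_simps)
  have b: "\<bar>\<gamma> * (vmax Q s' - vmax G s')\<bar> \<le> \<gamma> * c" for s'
  proof -
    have "vmax Q s' \<le> vmax G s' + c" by (rule vmax_le) (use assms(2) in \<open>smt (verit)\<close>)
    moreover have "vmax G s' \<le> vmax Q s' + c" by (rule vmax_le) (use assms(2) in \<open>smt (verit)\<close>)
    ultimately show ?thesis using assms(1) by (simp add: abs_mult abs_le_iff mult_left_mono)
  qed
  have u: "measure_pmf.expectation (P s a) (\<lambda>s'. \<gamma> * (vmax Q s' - vmax G s'))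
     \<le> measure_pmf.expectation (P s a) (\<lambda>s'. \<gamma> * c)"
    using b by (intro integral_mono) (auto intro: int simp: abs_le_iff)
  have l: "measure_pmf.expectation (P s a) (\<lambda>s'. - (\<gamma> * c))
     \<le> measure_pmf.expectation (P s a) (\<lambda>s'. \<gamma> * (vmax Q s' - vmax G s'))"
  proof (rule integral_mono)
    fix x show "- (\<gamma> * c) \<le> \<gamma> * (vmax Q x - vmax G x)" using b[of x] by linarith
  qed (auto intro: int)
  show ?thesis using d u l by (simp add: abs_le_iff)
qed

theorem lemma12:
  fixes \<gamma> \<sigma> D :: real and \<tau> :: nat
    and P :: "'s::finite \<Rightarrow> 'a::finite \<Rightarrow> 's pmf"
    and Rbar :: "'s \<Rightarrow> 'a \<Rightarrow> 's \<Rightarrow> real"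
    and Qs QA0 QB0 :: "('s, 'a) qfun"
    and \<alpha> :: "nat \<Rightarrow> real" and coin :: "nat \<Rightarrow> bool"
    and ns :: "nat \<Rightarrow> 's \<Rightarrow> 'a \<Rightarrow> 's" and R :: "nat \<Rightarrow> 's \<Rightarrow> 'a \<Rightarrow> 's \<Rightarrow> real"
    and astar bstar :: "nat \<Rightarrow> 's \<Rightarrow> 'a"
  defines "QA \<equiv> \<lambda>t. fst (dq \<gamma> \<alpha> coin ns R astar bstar QA0 QB0 t)"
      and "QB \<equiv> \<lambda>t. snd (dq \<gamma> \<alpha> coin ns R astar bstar QA0 QB0 t)"
      and "w \<equiv> \<lambda>t s a. R t s a (ns t s a)
              + \<gamma> * fst (dq \<gamma> \<alpha> coin ns R astar bstar QA0 QB0 t) (ns t s a) (astar t (ns t s a))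
              - bellman \<gamma> P Rbar (fst (dq \<gamma> \<alpha> coin ns R astar bstar QA0 QB0 t)) s a"
  assumes "0 < \<gamma>" and "\<gamma> < 1"
    and "bellman \<gamma> P Rbar Qs = Qs"
    and "\<And>t. 0 < \<alpha> t \<and> \<alpha> t \<le> 1"
    and "\<And>t s'. QA t s' (astar t s') = vmax (QA t) s'"
    and "\<And>t s'. QB t s' (bstar t s') = vmax (QB t) s'"
    and "0 < \<sigma>" and "1 \<le> \<tau>" and "0 \<le> D"
    and "\<And>t. \<tau> \<le> t \<Longrightarrow> qnorm (\<lambda>s a. QA t s a - Qs s a) \<le> D"
    and "\<And>t. \<tau> \<le> t \<Longrightarrow> qnorm (\<lambda>s a. QB t s a - QA t s a) \<le> \<sigma> * D"
  shows "\<forall>k s a.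
     - Yseq \<alpha> coin (\<gamma> * (1 + \<sigma>)) D \<tau> k s a + Wseq \<alpha> coin w \<tau> k s a \<le> QA (\<tau> + k) s a - Qs s a
   \<and> QA (\<tau> + k) s a - Qs s a \<le> Yseq \<alpha> coin (\<gamma> * (1 + \<sigma>)) D \<tau> k s a + Wseq \<alpha> coin w \<tau> k s a"
proof -
  let ?g = "\<gamma> * (1 + \<sigma>)"
  let ?Y = "Yseq \<alpha> coin ?g D \<tau>" and ?W = "Wseq \<alpha> coin w \<tau>"
  note QAs = assms(5)
  have rb: "\<bar>QA t s a - Qs s a\<bar> \<le> D" if "\<tau> \<le> t" for t s a
    using qnorm_ge[of "\<lambda>s a. QA t s a - Qs s a" s a] assms(13)[OF that] by simp
  have ub: "\<bar>QB t s a - QA t s a\<bar> \<le> \<sigma> * D" if "\<tau> \<le> t" for t s a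
    using qnorm_ge[of "\<lambda>s a. QB t s a - QA t s a" s a] assms(14)[OF that] by simp
  have step: "QA (Suc t) = (if coin t then (\<lambda>s a. QA t s a + \<alpha> t * (R t s a (ns t s a)
                 + \<gamma> * QB t (ns t s a) (astar t (ns t s a)) - QA t s a)) else QA t)" for t
    unfolding QA_def QB_def by (simp add: Let_def)
  have key: "\<bar>QA t s a + \<alpha> t * (R t s a (ns t s a) + \<gamma> * QB t (ns t s a) (astar t (ns t s a)) - QA t s a) - Qs s a
       - ((1 - \<alpha> t) * (QA t s a - Qs s a) + \<alpha> t * w t s a)\<bar> \<le> \<alpha> t * (?g * D)"
    if "\<tau> \<le> t" for t s a
  proof -
    let ?s' = "ns t s a" let ?a = "astar t (ns t s a)"
    have e: "QA t s a + \<alpha> t * (R t s a ?s' + \<gamma> * QB t ?s' ?a - QA t s a) - Qs s a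
       - ((1 - \<alpha> t) * (QA t s a - Qs s a) + \<alpha> t * w t s a)
      = \<alpha> t * ((bellman \<gamma> P Rbar (QA t) s a - bellman \<gamma> P Rbar Qs s a) + \<gamma> * (QB t ?s' ?a - QA t ?s' ?a))"
      using assms(6) unfolding w_def QA_def by (simp add: algebra_simps)
    have b1: "\<bar>bellman \<gamma> P Rbar (QA t) s a - bellman \<gamma> P Rbar Qs s a\<bar> \<le> \<gamma> * D"
      by (rule bellman_diff) (use assms(4) rb[OF that] in auto)
    have b2: "\<bar>\<gamma> * (QB t ?s' ?a - QA t ?s' ?a)\<bar> \<le> \<gamma> * (\<sigma> * D)"
      using ub[OF that, of ?s' ?a] assms(4) by (simp add: abs_mult mult_left_mono)
    have "\<bar>(bellman \<gamma> P Rbar (QA t) s a - bellman \<gamma> P Rbar Qs s a) + \<gamma> * (QB t ?s' ?a - QA t ?s' ?a)\<bar> \<le> ?g * D"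
      using b1 b2 abs_triangle_ineq[of "bellman \<gamma> P Rbar (QA t) s a - bellman \<gamma> P Rbar Qs s a" "\<gamma> * (QB t ?s' ?a - QA t ?s' ?a)"]
        distrib_left[of \<gamma> 1 \<sigma>] distrib_right[of \<gamma> "\<gamma> * \<sigma>" D]
      by (simp only: mult.assoc mult_1_right)
    then show ?thesis unfolding e using assms(7)[of t]
      by (simp add: abs_mult mult_left_mono)
  qed
  have "- ?Y k s a + ?W k s a \<le> QA (\<tau> + k) s a - Qs s a
     \<and> QA (\<tau> + k) s a - Qs s a \<le> ?Y k s a + ?W k s a" for k s a
  proof (induction k arbitrary: s a)
    case 0 then show ?case using rb[of \<tau> s a] by auto
  next
    case (Suc k)
    show ?case
    proof (cases "coin (\<tau> + k)")
      case False then show ?thesis using Suc[of s a] by (simp add: step)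
    next
      case True
      let ?t = "\<tau> + k"
      have k: "\<bar>QA (Suc ?t) s a - Qs s a - ((1 - \<alpha> ?t) * (QA ?t s a - Qs s a) + \<alpha> ?t * w ?t s a)\<bar> \<le> \<alpha> ?t * (?g * D)"
        using key[of ?t s a] True by (simp add: step)
      have a1: "0 \<le> 1 - \<alpha> ?t" using assms(7)[of ?t] by simp
      have m1: "(1 - \<alpha> ?t) * (QA ?t s a - Qs s a - ?W k s a) \<le> (1 - \<alpha> ?t) * ?Y k s a"
        using Suc[of s a] a1 by (intro mult_left_mono) auto
      have m2: "(1 - \<alpha> ?t) * (- ?Y k s a) \<le> (1 - \<alpha> ?t) * (QA ?t s a - Qs s a - ?W k s a)"
        using Suc[of s a] a1 by (intro mult_left_mono) auto
      have eQ: "QA (\<tau> + Suc k) = QA (Suc ?t)" by simp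
      have eY: "?Y (Suc k) s a = (1 - \<alpha> ?t) * ?Y k s a + \<alpha> ?t * ?g * D" using True by simp
      have eW: "?W (Suc k) s a = (1 - \<alpha> ?t) * ?W k s a + \<alpha> ?t * w ?t s a" using True by simp
      have d1: "(1 - \<alpha> ?t) * (QA ?t s a - Qs s a - ?W k s a) = (1 - \<alpha> ?t) * (QA ?t s a - Qs s a) - (1 - \<alpha> ?t) * ?W k s a"
        by (rule right_diff_distrib)
      have d2: "(1 - \<alpha> ?t) * (- ?Y k s a) = - ((1 - \<alpha> ?t) * ?Y k s a)" by simp
      have d3: "\<alpha> ?t * (?g * D) = \<alpha> ?t * ?g * D" by (rule mult.assoc[symmetric])
      show ?thesis unfolding eQ eY eW using k m1 m2 d1 d2 d3 abs_le_iff by linarith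
    qed
  qed
  then show ?thesis by blast
qed

end
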